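(* Let $G=(V,E)$ be a simple undirected graph with $V=[n]$, and let $k\ge 1$ be an integer. Consider the following three optimization problems. (P1) Maximize $\sum_{r\in[k]}\sum_{i\in[n]} Y^{rr}_{ii}$ over $Y\in\mathbb S^{n(k+1)}$, viewed as a $(k+1)\times(k+1)$ array of $n\times n$ blocks $Y^{rl}$ ($r,l\in[k+1]$), subject to: $Y^{rr}_{ij}=0$ for all $\{i,j\}\in E$, $r\in[k]$; $\sum_{r\in[k+1]}Y^{rr}_{ii}=1$ for all $i\in[n]$; $Y^{rl}_{ii}=0$ for all $i\in[n]$ and $r,l\in[k+1]$ with $r\ne l$; $Y\ge 0$ entrywise; and $\begin{bmatrix}1&\mathrm{diag}(Y)^{\top}\\ \mathrm{diag}(Y)&Y\end{bmatrix}\succeq 0$. (P2) Maximize $\sum_{r\in[k]}\sum_{i\in[n]} Y^{rr}_{ii}$ over $Y\in\mathbb S^{nk}$, viewed as a $k\times k$ array of $n\times n$ blocks $Y^{rl}$ ($r,l\in[k]$), subject to: $Y^{rr}_{ij}=0$ for all $\{i,j\}\in E$, $r\in[k]$; $Y^{rl}_{ii}=0$ for all $i\in[n]$, $r\neq l$; $Y\ge0$ entrywise; $\begin{bmatrix}1&\mathrm{diag}(Y)^{\top}\\ \mathrm{diag}(Y)&Y\end{bmatrix}\succeq 0$; and additionally $1-\sum_{r\in[k]}Y^{rr}_{ii}-\sum_{r\in[k]}Y^{rr}_{jj}+\sum_{r\in[k]}\sum_{l\in[k]}Y^{rl}_{ij}\ge 0$ for all $i,j\in[n]$ with $i>j$,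 and $Y^{ll}_{ii}-\sum_{r\in[k]}Y^{rl}_{ij}\ge 0$ for all $i,j\in[n]$ with $i\ne j$ and all $l\in[k]$. (R1) $\theta^1_k(G)=\max \langle I,Z\rangle$ over $Z,X\in\mathbb S^n$ subject to: $Z_{ij}=0$ for $\{i,j\}\in E$; $X_{ii}=0$ for $i\in[n]$; $Z\ge0$, $X\ge 0$ entrywise; $Z-X\succeq 0$; $\begin{bmatrix}1&\mathrm{diag}(Z)^{\top}\\ \mathrm{diag}(Z)&Z+(k-1)X\end{bmatrix}\succeq 0$; $1-Z_{ii}-Z_{jj}+Z_{ij}+(k-1)X_{ij}\ge 0$ for $i,j\in[n]$, $i>j$; and $Z_{ii}-Z_{ij}-(k-1)X_{ij}\ge 0$ for $i,j\in[n]$, $i\ne j$. Then (P1), (P2) and (R1) are equivalent (for each, any feasible solution yields a feasible solution of each of the others with the same objective value; in particular their optimal values coincide), and (R1) is strictly feasible.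
   Context: $\mathbb S^m$ is the space of real symmetric $m\times m$ matrices; $\langle A,B\rangle=\mathrm{trace}(AB)$; $\mathrm{diag}(Y)$ is the vector of diagonal entries of $Y$; $A\ge 0$ means entrywise nonnegativity and $\succeq 0$ (resp. $\succ0$) means positive semidefinite (resp. definite). Strict feasibility of (R1) means there is a feasible point of (R1) at which both matrix inequalities hold with positive definite matrices. *)

theory Defs
  imports Complex_Main
begin

text \<open>Vertices are 0,...,n-1 (standing for [n]); a block matrix with m blocks of size n
  is indexed by pairs (r,i) with r < m (block index) and i < n (vertex index).\<close>

definition sym_on :: "'a set \<Rightarrow> ('a \<Rightarrow> 'a \<Rightarrow> real) \<Rightarrow> bool" where
  "sym_on I M \<longleftrightarrow> (\<forall>i\<in>I. \<forall>j\<in>I. M i j = M j i)"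

definition psd_on :: "'a set \<Rightarrow> ('a \<Rightarrow> 'a \<Rightarrow> real) \<Rightarrow> bool" where
  "psd_on I M \<longleftrightarrow> sym_on I M \<and>
     (\<forall>x. 0 \<le> (\<Sum>i\<in>I. \<Sum>j\<in>I. x i * M i j * x j))"

definition pd_on :: "'a set \<Rightarrow> ('a \<Rightarrow> 'a \<Rightarrow> real) \<Rightarrow> bool" where
  "pd_on I M \<longleftrightarrow> sym_on I M \<and>
     (\<forall>x. (\<exists>i\<in>I. x i \<noteq> 0) \<longrightarrow> 0 < (\<Sum>i\<in>I. \<Sum>j\<in>I. x i * M i j * x j))"

text \<open>The bordered matrix [1, d^T; d, M], indexed by None (the border) and Some a.\<close>
definition bordered :: "('a \<Rightarrow> real) \<Rightarrow> ('a \<Rightarrow> 'a \<Rightarrow> real) \<Rightarrow> 'a option \<Rightarrow> 'a option \<Rightarrow> real" where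
  "bordered d M a b = (case (a, b) of
      (None, None) \<Rightarrow> 1
    | (None, Some j) \<Rightarrow> d j
    | (Some i, None) \<Rightarrow> d i
    | (Some i, Some j) \<Rightarrow> M i j)"

definition bidx :: "'a set \<Rightarrow> 'a option set" where
  "bidx I = insert None (Some ` I)"

definition blk :: "nat \<Rightarrow> nat \<Rightarrow> (nat \<times> nat) set" where
  "blk m n = {(r, i). r < m \<and> i < n}"

definition simple_graph :: "nat \<Rightarrow> nat set set \<Rightarrow> bool" where
  "simple_graph n E \<longleftrightarrow> (\<forall>e\<in>E. \<exists>i j. e = {i, j} \<and> i \<noteq> j \<and> i < n \<and> j < n)"

definition objY :: "nat \<Rightarrow> nat \<Rightarrow> (nat \<times> nat \<Rightarrow> nat \<times> nat \<Rightarrow> real) \<Rightarrow> real" where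
  "objY n k Y = (\<Sum>r<k. \<Sum>i<n. Y (r, i) (r, i))"

definition objZ :: "nat \<Rightarrow> (nat \<Rightarrow> nat \<Rightarrow> real) \<Rightarrow> real" where
  "objZ n Z = (\<Sum>i<n. Z i i)"

definition feasP1 :: "nat \<Rightarrow> nat set set \<Rightarrow> nat \<Rightarrow> (nat \<times> nat \<Rightarrow> nat \<times> nat \<Rightarrow> real) \<Rightarrow> bool" where
  "feasP1 n E k Y \<longleftrightarrow>
     sym_on (blk (k+1) n) Y \<and>
     (\<forall>r<k. \<forall>i j. {i, j} \<in> E \<longrightarrow> Y (r, i) (r, j) = 0) \<and>
     (\<forall>i<n. (\<Sum>r<k+1. Y (r, i) (r, i)) = 1) \<and>
     (\<forall>i<n. \<forall>r<k+1. \<forall>l<k+1. r \<noteq> l \<longrightarrow> Y (r, i) (l, i) = 0) \<and>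
     (\<forall>a\<in>blk (k+1) n. \<forall>b\<in>blk (k+1) n. 0 \<le> Y a b) \<and>
     psd_on (bidx (blk (k+1) n)) (bordered (\<lambda>a. Y a a) Y)"

definition feasP2 :: "nat \<Rightarrow> nat set set \<Rightarrow> nat \<Rightarrow> (nat \<times> nat \<Rightarrow> nat \<times> nat \<Rightarrow> real) \<Rightarrow> bool" where
  "feasP2 n E k Y \<longleftrightarrow>
     sym_on (blk k n) Y \<and>
     (\<forall>r<k. \<forall>i j. {i, j} \<in> E \<longrightarrow> Y (r, i) (r, j) = 0) \<and>
     (\<forall>i<n. \<forall>r<k. \<forall>l<k. r \<noteq> l \<longrightarrow> Y (r, i) (l, i) = 0) \<and>
     (\<forall>a\<in>blk k n. \<forall>b\<in>blk k n. 0 \<le> Y a b) \<and>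
     psd_on (bidx (blk k n)) (bordered (\<lambda>a. Y a a) Y) \<and>
     (\<forall>i<n. \<forall>j<n. j < i \<longrightarrow>
        0 \<le> 1 - (\<Sum>r<k. Y (r, i) (r, i)) - (\<Sum>r<k. Y (r, j) (r, j))
               + (\<Sum>r<k. \<Sum>l<k. Y (r, i) (l, j))) \<and>
     (\<forall>i<n. \<forall>j<n. i \<noteq> j \<longrightarrow> (\<forall>l<k.
        0 \<le> Y (l, i) (l, i) - (\<Sum>r<k. Y (r, i) (l, j))))"

definition feasR1 :: "nat \<Rightarrow> nat set set \<Rightarrow> nat \<Rightarrow> (nat \<Rightarrow> nat \<Rightarrow> real) \<Rightarrow> (nat \<Rightarrow> nat \<Rightarrow> real) \<Rightarrow> bool" where
  "feasR1 n E k Z X \<longleftrightarrow>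
     sym_on {..<n} Z \<and> sym_on {..<n} X \<and>
     (\<forall>i j. {i, j} \<in> E \<longrightarrow> Z i j = 0) \<and>
     (\<forall>i<n. X i i = 0) \<and>
     (\<forall>i<n. \<forall>j<n. 0 \<le> Z i j \<and> 0 \<le> X i j) \<and>
     psd_on {..<n} (\<lambda>i j. Z i j - X i j) \<and>
     psd_on (bidx {..<n}) (bordered (\<lambda>i. Z i i) (\<lambda>i j. Z i j + (real k - 1) * X i j)) \<and>
     (\<forall>i<n. \<forall>j<n. j < i \<longrightarrow> 0 \<le> 1 - Z i i - Z j j + Z i j + (real k - 1) * X i j) \<and>
     (\<forall>i<n. \<forall>j<n. i \<noteq> j \<longrightarrow> 0 \<le> Z i i - Z i j - (real k - 1) * X i j)"

end

theory Submission
  imports Defs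
begin

definition bf :: "'a set \<Rightarrow> ('a \<Rightarrow> 'a \<Rightarrow> real) \<Rightarrow> ('a \<Rightarrow> real) \<Rightarrow> ('a \<Rightarrow> real) \<Rightarrow> real" where
  "bf J M u v = (\<Sum>a\<in>J. \<Sum>b\<in>J. u a * M a b * v b)"

definition dl :: "'a \<Rightarrow> 'a \<Rightarrow> real" where
  "dl a = (\<lambda>x. if x = a then 1 else 0)"

lemma bf_diff_left: "bf J M (\<lambda>x. u x - v x) w = bf J M u w - bf J M v w"
  unfolding bf_def by (simp add: left_diff_distrib sum_subtractf)
lemma bf_diff_right: "bf J M w (\<lambda>x. u x - v x) = bf J M w u - bf J M w v"
  unfolding bf_def by (simp add: right_diff_distrib sum_subtractf)
lemma bf_add_left: "bf J M (\<lambda>x. u x + v x) w = bf J M u w + bf J M v w"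
  unfolding bf_def by (simp add: distrib_right sum.distrib)
lemma bf_add_right: "bf J M w (\<lambda>x. u x + v x) = bf J M w u + bf J M w v"
  unfolding bf_def by (simp add: distrib_left sum.distrib)
lemma bf_scale_left: "bf J M (\<lambda>x. c * u x) w = c * bf J M u w"
  unfolding bf_def by (simp add: sum_distrib_left mult.assoc)
lemma bf_scale_right: "bf J M w (\<lambda>x. c * u x) = c * bf J M w u"
  unfolding bf_def by (simp add: sum_distrib_left mult_ac)
lemma bf_sum_left: "bf J M (\<lambda>x. \<Sum>r\<in>R. f r x) w = (\<Sum>r\<in>R. bf J M (f r) w)"
  unfolding bf_def by (simp add: sum_distrib_right sum.swap[of _ R])
lemma bf_sum_right: "bf J M w (\<lambda>x. \<Sum>r\<in>R. f r x) = (\<Sum>r\<in>R. bf J M w (f r))"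
proof -
  have "bf J M w (\<lambda>x. \<Sum>r\<in>R. f r x) = (\<Sum>a\<in>J. \<Sum>b\<in>J. \<Sum>r\<in>R. w a * M a b * f r b)"
    unfolding bf_def by (simp add: sum_distrib_left)
  also have "\<dots> = (\<Sum>r\<in>R. \<Sum>a\<in>J. \<Sum>b\<in>J. w a * M a b * f r b)"
    by (simp add: sum.swap[of _ R])
  finally show ?thesis unfolding bf_def .
qed
lemma bf_zero_left: "bf J M (\<lambda>x. 0) w = 0" unfolding bf_def by simp
lemma bf_zero_right: "bf J M w (\<lambda>x. 0) = 0" unfolding bf_def by simp

lemma bf_dl_left: assumes "finite J" "a \<in> J" shows "bf J M (dl a) v = (\<Sum>b\<in>J. M a b * v b)"
proof -
  have "bf J M (dl a) v = (\<Sum>aa\<in>J. if aa = a then (\<Sum>b\<in>J. M a b * v b) else 0)"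
    unfolding bf_def dl_def by (intro sum.cong refl) auto
  then show ?thesis using assms by simp
qed
lemma sum_dl: assumes "finite J" "b \<in> J" shows "(\<Sum>a\<in>J. f a * dl b a) = f b"
proof -
  have "(\<Sum>a\<in>J. f a * dl b a) = (\<Sum>a\<in>J. if a = b then f b else 0)"
    unfolding dl_def by (intro sum.cong refl) auto
  then show ?thesis using assms by simp
qed
lemma bf_dl_right: assumes "finite J" "b \<in> J" shows "bf J M u (dl b) = (\<Sum>a\<in>J. u a * M a b)"
proof -
  have "bf J M u (dl b) = (\<Sum>a\<in>J. u a * M a b)"
    unfolding bf_def by (intro sum.cong refl, rule sum_dl[OF assms])
  then show ?thesis .
qed
lemma bf_dl_dl: "finite J \<Longrightarrow> a \<in> J \<Longrightarrow> b \<in> J \<Longrightarrow> bf J M (dl a) (dl b) = M a b"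
  by (simp add: bf_dl_left sum_dl)

lemma bf_sym: assumes "sym_on J M" shows "bf J M u v = bf J M v u"
proof -
  have "bf J M u v = (\<Sum>b\<in>J. \<Sum>a\<in>J. u a * M a b * v b)" unfolding bf_def by (rule sum.swap)
  also have "\<dots> = bf J M v u" unfolding bf_def
    using assms unfolding sym_on_def by (intro sum.cong refl) (simp add: mult_ac)
  finally show ?thesis .
qed

lemma psd_bf: "psd_on J M \<longleftrightarrow> sym_on J M \<and> (\<forall>x. 0 \<le> bf J M x x)"
  unfolding psd_on_def bf_def by simp

lemma psd_congr_sum:
  fixes L :: "'r \<Rightarrow> 'a \<Rightarrow> 'b \<Rightarrow> real"
  assumes fI: "finite I" and psd: "psd_on J M" and symN: "sym_on I N"
    and c: "\<And>\<rho>. \<rho> \<in> R \<Longrightarrow> 0 \<le> c \<rho>"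
    and eq: "\<And>\<alpha> \<beta>. \<alpha> \<in> I \<Longrightarrow> \<beta> \<in> I \<Longrightarrow> N \<alpha> \<beta> = (\<Sum>\<rho>\<in>R. c \<rho> * bf J M (L \<rho> \<alpha>) (L \<rho> \<beta>))"
  shows "psd_on I N"
proof -
  have "0 \<le> bf I N x x" for x
  proof -
    define v where "v \<rho> = (\<lambda>a. \<Sum>\<alpha>\<in>I. x \<alpha> * L \<rho> \<alpha> a)" for \<rho>
    have bv: "bf J M (v \<rho>) (v \<rho>) = (\<Sum>\<alpha>\<in>I. \<Sum>\<beta>\<in>I. x \<alpha> * bf J M (L \<rho> \<alpha>) (L \<rho> \<beta>) * x \<beta>)" for \<rho>
      unfolding v_def bf_sum_left bf_sum_right bf_scale_left bf_scale_right
      by (simp add: sum_distrib_left mult_ac)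
    have "bf I N x x = (\<Sum>\<alpha>\<in>I. \<Sum>\<beta>\<in>I. \<Sum>\<rho>\<in>R. c \<rho> * (x \<alpha> * bf J M (L \<rho> \<alpha>) (L \<rho> \<beta>) * x \<beta>))" (is "_ = ?rhs")
    proof -
      have "bf I N x x = (\<Sum>\<alpha>\<in>I. \<Sum>\<beta>\<in>I. x \<alpha> * N \<alpha> \<beta> * x \<beta>)" by (simp add: bf_def)
      also have "\<dots> = ?rhs" by (intro sum.cong refl) (simp add: eq sum_distrib_left sum_distrib_right mult_ac)
      finally show ?thesis .
    qed
    also have "\<dots> = (\<Sum>\<rho>\<in>R. c \<rho> * bf J M (v \<rho>) (v \<rho>))"
      unfolding bv by (simp add: sum_distrib_left sum.swap[of _ R])
    also have "\<dots> \<ge> 0" using psd c unfolding psd_bf by (intro sum_nonneg mult_nonneg_nonneg) auto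
    finally show ?thesis .
  qed
  then show ?thesis using symN unfolding psd_bf by auto
qed

lemma psd_congr:
  assumes fI: "finite I" and psd: "psd_on J M" and symN: "sym_on I N"
    and eq: "\<And>\<alpha> \<beta>. \<alpha> \<in> I \<Longrightarrow> \<beta> \<in> I \<Longrightarrow> N \<alpha> \<beta> = bf J M (L \<alpha>) (L \<beta>)"
  shows "psd_on I N"
  using psd_congr_sum[OF fI psd symN, of "{()}" "\<lambda>_. 1" "\<lambda>_. L"] eq by simp

lemma psd_add: assumes "psd_on I A" "psd_on I B" shows "psd_on I (\<lambda>a b. A a b + B a b)"
  using assms unfolding psd_bf sym_on_def bf_def
  by (auto simp: distrib_left distrib_right sum.distrib intro!: add_nonneg_nonneg)

lemma psd_cong: assumes "psd_on I A" "\<And>a b. a \<in> I \<Longrightarrow> b \<in> I \<Longrightarrow> A a b = B a b" shows "psd_on I B"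
proof -
  have "bf I A x x = bf I B x x" for x unfolding bf_def using assms(2) by (intro sum.cong refl) auto
  then show ?thesis using assms unfolding psd_bf sym_on_def by auto
qed

lemma null_vec:
  assumes fJ: "finite J" and psd: "psd_on J M" and a: "a \<in> J" and w: "bf J M w w = 0"
  shows "bf J M (dl a) w = 0"
proof -
  have sym: "sym_on J M" using psd unfolding psd_bf by auto
  define c where "c = bf J M (dl a) w"
  define m where "m = M a a"
  have m0: "0 \<le> m" using psd bf_dl_dl[OF fJ a a, of M] unfolding psd_bf m_def by metis
  have key: "0 \<le> 2 * t * c + t * t * m" for t
  proof -
    have "0 \<le> bf J M (\<lambda>x. w x + t * dl a x) (\<lambda>x. w x + t * dl a x)" using psd unfolding psd_bf by auto
    also have "\<dots> = bf J M w w + t * bf J M (dl a) w + t * bf J M w (dl a) + t * t * bf J M (dl a) (dl a)"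
      by (simp add: bf_add_left bf_add_right bf_scale_left bf_scale_right algebra_simps)
    also have "\<dots> = 2 * t * c + t * t * m"
      using w bf_sym[OF sym, of w "dl a"] bf_dl_dl[OF fJ a a, of M] unfolding c_def m_def by simp
    finally show ?thesis .
  qed
  have nz: "m + 1 \<noteq> 0" using m0 by simp
  define y where "y = c / (m + 1)"
  have cy: "c = y * (m + 1)" unfolding y_def using nz by simp
  have "0 \<le> 2 * (- y) * (y * (m + 1)) + (- y) * (- y) * m" using key[of "- y"] unfolding cy .
  also have "\<dots> = - (y * y) * (m + 2)" by (simp add: algebra_simps)
  finally have "y * y * (m + 2) \<le> 0" by simp
  then have "y * y \<le> 0" using m0 by (simp add: mult_le_0_iff)
  then have "y = 0" by (metis mult_eq_0_iff not_square_less_zero order_antisym_conv zero_le_square)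
  then have "c = 0" using cy by simp
  then show ?thesis unfolding c_def by simp
qed

lemma pd_psd: "pd_on I M \<Longrightarrow> psd_on I M"
  unfolding pd_on_def psd_on_def
  by (metis (no_types, lifting) less_eq_real_def mult_eq_0_iff sum.neutral)

lemma fin_blk[simp]: "finite (blk k n)"
proof -
  have "blk k n = {..<k} \<times> {..<n}" unfolding blk_def by auto
  then show ?thesis by simp
qed
lemma mem_blk[simp]: "(a, b) \<in> blk k n \<longleftrightarrow> a < k \<and> b < n" unfolding blk_def by simp
lemma fin_bidx[simp]: "finite I \<Longrightarrow> finite (bidx I)" unfolding bidx_def by simp
lemma mem_bidx[simp]: "None \<in> bidx I" "Some a \<in> bidx I \<longleftrightarrow> a \<in> I" unfolding bidx_def by auto
lemma bord_simps[simp]: "bordered d M None None = 1" "bordered d M None (Some j) = d j"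
  "bordered d M (Some i) None = d i" "bordered d M (Some i) (Some j) = M i j"
  unfolding bordered_def by auto
lemma sum_blk: "(\<Sum>a\<in>blk k n. f a) = (\<Sum>r<k. \<Sum>i<n. f (r, i))"
proof -
  have "blk k n = {..<k} \<times> {..<n}" unfolding blk_def by auto
  then show ?thesis by (simp add: sum.cartesian_product)
qed
lemma sym_bordered: "sym_on I M \<Longrightarrow> sym_on (bidx I) (bordered d M)"
  unfolding sym_on_def bidx_def bordered_def by auto

definition ZY :: "nat \<Rightarrow> (nat \<times> nat \<Rightarrow> nat \<times> nat \<Rightarrow> real) \<Rightarrow> nat \<Rightarrow> nat \<Rightarrow> real" where
  "ZY k Y i j = (\<Sum>r<k. Y (r, i) (r, j))"
definition SY :: "nat \<Rightarrow> (nat \<times> nat \<Rightarrow> nat \<times> nat \<Rightarrow> real) \<Rightarrow> nat \<Rightarrow> nat \<Rightarrow> real" where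
  "SY k Y i j = (\<Sum>r<k. \<Sum>l<k. Y (r, i) (l, j))"
definition OY :: "nat \<Rightarrow> (nat \<times> nat \<Rightarrow> nat \<times> nat \<Rightarrow> real) \<Rightarrow> nat \<Rightarrow> nat \<Rightarrow> real" where
  "OY k Y i j = (\<Sum>r<k. \<Sum>l<k. if r = l then 0 else Y (r, i) (l, j))"
definition XY :: "nat \<Rightarrow> (nat \<times> nat \<Rightarrow> nat \<times> nat \<Rightarrow> real) \<Rightarrow> nat \<Rightarrow> nat \<Rightarrow> real" where
  "XY k Y i j = OY k Y i j / (real k - 1)"

lemma SY_split: "SY k Y i j = ZY k Y i j + OY k Y i j"
proof -
  have "(\<Sum>l<k. Y (r, i) (l, j)) = Y (r, i) (r, j) + (\<Sum>l<k. if r = l then 0 else Y (r, i) (l, j))"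
    if "r < k" for r
  proof -
    have "(\<Sum>l<k. Y (r, i) (l, j)) = (\<Sum>l<k. (if r = l then Y (r, i) (r, j) else 0) + (if r = l then 0 else Y (r, i) (l, j)))"
      by (intro sum.cong refl) auto
    also have "\<dots> = Y (r, i) (r, j) + (\<Sum>l<k. if r = l then 0 else Y (r, i) (l, j))"
      using that by (simp add: sum.distrib)
    finally show ?thesis .
  qed
  then show ?thesis unfolding SY_def ZY_def OY_def by (simp add: sum.distrib)
qed

lemma OY_k1: "k = 1 \<Longrightarrow> OY k Y i j = 0" unfolding OY_def by simp

lemma XY_mult: "(real k - 1) * XY k Y i j = OY k Y i j" if "1 \<le> k"
proof (cases "k = 1")
  case True then show ?thesis using OY_k1 by simp
next
  case False then have "real k - 1 \<noteq> 0" using that by simp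
  then show ?thesis unfolding XY_def by simp
qed

lemma S_eq: "1 \<le> k \<Longrightarrow> ZY k Y i j + (real k - 1) * XY k Y i j = SY k Y i j"
  using XY_mult SY_split by simp

lemma core_R1:
  assumes k1: "1 \<le> k"
  and sym: "sym_on (blk k n) Y"
  and edge: "\<forall>r<k. \<forall>i j. {i, j} \<in> E \<longrightarrow> Y (r, i) (r, j) = 0"
  and off: "\<forall>i<n. \<forall>r<k. \<forall>l<k. r \<noteq> l \<longrightarrow> Y (r, i) (l, i) = 0"
  and nn: "\<forall>a\<in>blk k n. \<forall>b\<in>blk k n. 0 \<le> Y a b"
  and psd: "psd_on (bidx (blk k n)) (bordered (\<lambda>a. Y a a) Y)"
  and ia: "\<forall>i<n. \<forall>j<n. j < i \<longrightarrow> 0 \<le> 1 - ZY k Y i i - ZY k Y j j + SY k Y i j"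
  and ib: "\<forall>i<n. \<forall>j<n. i \<noteq> j \<longrightarrow> 0 \<le> ZY k Y i i - SY k Y i j"
  shows "feasR1 n E k (ZY k Y) (XY k Y) \<and> objZ n (ZY k Y) = objY n k Y"
proof -
  let ?Z = "ZY k Y" and ?X = "XY k Y" and ?J = "bidx (blk k n)" and ?M = "bordered (\<lambda>a. Y a a) Y"
  have fJ: "finite ?J" by simp
  have Ysym: "Y (r, i) (l, j) = Y (l, j) (r, i)" if "r < k" "l < k" "i < n" "j < n" for r l i j
    using sym that unfolding sym_on_def by auto
  have symZ: "sym_on {..<n} ?Z" unfolding sym_on_def ZY_def using Ysym by (auto intro!: sum.cong)
  have symS: "SY k Y i j = SY k Y j i" if "i < n" "j < n" for i j
  proof -
    have "SY k Y i j = (\<Sum>r<k. \<Sum>l<k. Y (l, j) (r, i))" unfolding SY_def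
      using Ysym that by (auto intro!: sum.cong)
    also have "\<dots> = SY k Y j i" unfolding SY_def by (rule sum.swap)
    finally show ?thesis .
  qed
  have symO: "OY k Y i j = OY k Y j i" if "i < n" "j < n" for i j
  proof -
    have "OY k Y i j = (\<Sum>r<k. \<Sum>l<k. if l = r then 0 else Y (l, j) (r, i))" unfolding OY_def
      using Ysym that by (auto intro!: sum.cong)
    also have "\<dots> = OY k Y j i" unfolding OY_def by (rule sum.swap)
    finally show ?thesis .
  qed
  have symX: "sym_on {..<n} ?X" unfolding sym_on_def XY_def using symO by auto
  have edgeZ: "\<forall>i j. {i, j} \<in> E \<longrightarrow> ?Z i j = 0" unfolding ZY_def using edge by simp
  have Xdiag: "\<forall>i<n. ?X i i = 0"
  proof (intro allI impI)
    fix i assume "i < n"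
    then have "OY k Y i i = 0" unfolding OY_def using off by (intro sum.neutral ballI) auto
    then show "?X i i = 0" unfolding XY_def by simp
  qed
  have nnZ: "0 \<le> ?Z i j" if "i < n" "j < n" for i j
    unfolding ZY_def using nn that by (auto intro!: sum_nonneg)
  have nnX: "0 \<le> ?X i j" if "i < n" "j < n" for i j
    unfolding XY_def OY_def using nn that k1 by (auto intro!: sum_nonneg divide_nonneg_nonneg)
  have Yent: "bf ?J ?M (dl (Some (r, i))) (dl (Some (l, j))) = Y (r, i) (l, j)"
    if "r < k" "l < k" "i < n" "j < n" for r l i j
    using that by (simp add: bf_dl_dl)
  have psdW: "psd_on {..<n} (\<lambda>i j. ?Z i j - ?X i j)"
  proof (cases "k = 1")
    case True
    show ?thesis
    proof (rule psd_congr[OF _ psd, of _ _ "\<lambda>i. dl (Some (0, i))"])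
      show "sym_on {..<n} (\<lambda>i j. ?Z i j - ?X i j)" using symZ symX unfolding sym_on_def by auto
      show "?Z \<alpha> \<beta> - ?X \<alpha> \<beta> = bf ?J ?M (dl (Some (0, \<alpha>))) (dl (Some (0, \<beta>)))"
        if "\<alpha> \<in> {..<n}" "\<beta> \<in> {..<n}" for \<alpha> \<beta>
        using that True Yent[of 0 0 \<alpha> \<beta>] by (simp add: ZY_def XY_def)
    qed simp
  next
    case False
    then have k2: "2 \<le> k" using k1 by simp
    show ?thesis
    proof (rule psd_congr_sum[OF _ psd, of _ _ "{..<k} \<times> {..<k}" "\<lambda>_. 1 / (2 * (real k - 1))"
          "\<lambda>(r, l) i. (\<lambda>x. dl (Some (r, i)) x - dl (Some (l, i)) x)"])
      show "sym_on {..<n} (\<lambda>i j. ?Z i j - ?X i j)" using symZ symX unfolding sym_on_def by auto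
      show "0 \<le> 1 / (2 * (real k - 1))" using k2 by simp
      fix i j assume ij: "i \<in> {..<n}" "j \<in> {..<n}"
      have e1: "bf ?J ?M (\<lambda>x. dl (Some (r, i)) x - dl (Some (l, i)) x) (\<lambda>x. dl (Some (r, j)) x - dl (Some (l, j)) x)
          = Y (r, i) (r, j) - Y (r, i) (l, j) - Y (l, i) (r, j) + Y (l, i) (l, j)"
        if "r < k" "l < k" for r l
        using that ij by (simp add: bf_diff_left bf_diff_right Yent)
      have "(\<Sum>\<rho>\<in>{..<k} \<times> {..<k}. 1 / (2 * (real k - 1)) *
            bf ?J ?M ((\<lambda>(r, l) i. (\<lambda>x. dl (Some (r, i)) x - dl (Some (l, i)) x)) \<rho> i)
              ((\<lambda>(r, l) i. (\<lambda>x. dl (Some (r, i)) x - dl (Some (l, i)) x)) \<rho> j))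
          = 1 / (2 * (real k - 1)) * (\<Sum>r<k. \<Sum>l<k. Y (r, i) (r, j) - Y (r, i) (l, j) - Y (l, i) (r, j) + Y (l, i) (l, j))"
      proof -
        let ?c = "1 / (2 * (real k - 1))"
        let ?LL = "\<lambda>(r, l) i. (\<lambda>x. dl (Some (r, i)) x - dl (Some (l, i)) x)"
        have "(\<Sum>\<rho>\<in>{..<k} \<times> {..<k}. ?c * bf ?J ?M (?LL \<rho> i) (?LL \<rho> j))
           = (\<Sum>r<k. \<Sum>l<k. ?c * bf ?J ?M (?LL (r, l) i) (?LL (r, l) j))"
          by (subst sum.cartesian_product) (simp add: split_beta)
        also have "\<dots> = (\<Sum>r<k. \<Sum>l<k. ?c * (Y (r, i) (r, j) - Y (r, i) (l, j) - Y (l, i) (r, j) + Y (l, i) (l, j)))"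
          by (intro sum.cong refl) (simp add: e1)
        also have "\<dots> = ?c * (\<Sum>r<k. \<Sum>l<k. Y (r, i) (r, j) - Y (r, i) (l, j) - Y (l, i) (r, j) + Y (l, i) (l, j))"
          by (simp add: sum_distrib_left)
        finally show ?thesis .
      qed
      also have "(\<Sum>r<k. \<Sum>l<k. Y (r, i) (r, j) - Y (r, i) (l, j) - Y (l, i) (r, j) + Y (l, i) (l, j))
          = real k * ?Z i j - SY k Y i j - SY k Y i j + real k * ?Z i j"
      proof -
        have a: "(\<Sum>r<k. \<Sum>l<k. Y (r, i) (r, j)) = real k * ?Z i j" unfolding ZY_def by (simp add: sum_distrib_left)
        have b: "(\<Sum>r<k. \<Sum>l<k. Y (l, i) (l, j)) = real k * ?Z i j" unfolding ZY_def
          by (subst sum.swap) (simp add: sum_distrib_left)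
        have c: "(\<Sum>r<k. \<Sum>l<k. Y (l, i) (r, j)) = SY k Y i j" unfolding SY_def by (rule sum.swap)
        show ?thesis using a b c unfolding SY_def by (simp add: sum.distrib sum_subtractf)
      qed
      also have "1 / (2 * (real k - 1)) * (real k * ?Z i j - SY k Y i j - SY k Y i j + real k * ?Z i j) = ?Z i j - ?X i j"
      proof -
        have "SY k Y i j = ?Z i j + (real k - 1) * ?X i j" using S_eq[OF k1] by simp
        moreover have "real k - 1 \<noteq> 0" using k2 by simp
        ultimately show ?thesis by (simp add: field_simps)
      qed
      finally show "?Z i j - ?X i j = (\<Sum>\<rho>\<in>{..<k} \<times> {..<k}. 1 / (2 * (real k - 1)) *
            bf ?J ?M ((\<lambda>(r, l) i. (\<lambda>x. dl (Some (r, i)) x - dl (Some (l, i)) x)) \<rho> i)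
              ((\<lambda>(r, l) i. (\<lambda>x. dl (Some (r, i)) x - dl (Some (l, i)) x)) \<rho> j))" by simp
    qed simp
  qed
  let ?L = "\<lambda>\<alpha>. case \<alpha> of None \<Rightarrow> dl None | Some i \<Rightarrow> (\<lambda>x. \<Sum>r<k. dl (Some (r, i)) x)"
  have psdB: "psd_on (bidx {..<n}) (bordered (\<lambda>i. ?Z i i) (\<lambda>i j. ?Z i j + (real k - 1) * ?X i j))"
  proof (rule psd_congr[OF _ psd, of _ _ ?L])
    show "sym_on (bidx {..<n}) (bordered (\<lambda>i. ?Z i i) (\<lambda>i j. ?Z i j + (real k - 1) * ?X i j))"
      using symZ symX by (intro sym_bordered) (auto simp: sym_on_def)
    fix \<alpha> \<beta> assume ab: "\<alpha> \<in> bidx {..<n}" "\<beta> \<in> bidx {..<n}"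
    have NN: "bf ?J ?M (dl None) (dl None) = 1" by (simp add: bf_dl_dl)
    have NS: "bf ?J ?M (dl None) (\<lambda>x. \<Sum>r<k. dl (Some (r, j)) x) = ?Z j j" if "j < n" for j
      using that unfolding bf_sum_right ZY_def by (intro sum.cong refl) (simp add: bf_dl_dl)
    have SN: "bf ?J ?M (\<lambda>x. \<Sum>r<k. dl (Some (r, j)) x) (dl None) = ?Z j j" if "j < n" for j
      using that unfolding bf_sum_left ZY_def by (intro sum.cong refl) (simp add: bf_dl_dl)
    have SS: "bf ?J ?M (\<lambda>x. \<Sum>r<k. dl (Some (r, i)) x) (\<lambda>x. \<Sum>r<k. dl (Some (r, j)) x) = SY k Y i j"
      if "i < n" "j < n" for i j
      using that unfolding bf_sum_left bf_sum_right SY_def by (intro sum.cong refl) (simp add: bf_dl_dl)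
    show "bordered (\<lambda>i. ?Z i i) (\<lambda>i j. ?Z i j + (real k - 1) * ?X i j) \<alpha> \<beta> = bf ?J ?M (?L \<alpha>) (?L \<beta>)"
      using ab NN NS SN SS S_eq[OF k1] by (cases \<alpha>; cases \<beta>) (auto simp: bidx_def)
  qed simp
  have iaR: "\<forall>i<n. \<forall>j<n. j < i \<longrightarrow> 0 \<le> 1 - ?Z i i - ?Z j j + ?Z i j + (real k - 1) * ?X i j"
    using ia S_eq[OF k1] by (simp add: add.assoc)
  have ibR: "\<forall>i<n. \<forall>j<n. i \<noteq> j \<longrightarrow> 0 \<le> ?Z i i - ?Z i j - (real k - 1) * ?X i j"
    using ib S_eq[OF k1] by (metis diff_diff_eq)
  have obj: "objZ n ?Z = objY n k Y" unfolding objZ_def objY_def ZY_def by (rule sum.swap)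
  show ?thesis unfolding feasR1_def using symZ symX edgeZ Xdiag nnZ nnX psdW psdB iaR ibR obj by blast
qed

lemma psd_sub: assumes "psd_on I M" "finite I" "J \<subseteq> I" shows "psd_on J M"
proof (rule psd_congr[OF _ assms(1), of _ _ dl])
  show "finite J" using assms finite_subset by blast
  show "sym_on J M" using assms unfolding psd_on_def sym_on_def by blast
  show "M a b = bf I M (dl a) (dl b)" if "a \<in> J" "b \<in> J" for a b
    using that assms by (simp add: bf_dl_dl subset_eq)
qed

lemma P2_R1:
  assumes k1: "1 \<le> k" and F: "feasP2 n E k Y"
  shows "feasR1 n E k (ZY k Y) (XY k Y) \<and> objZ n (ZY k Y) = objY n k Y"
proof (rule core_R1[OF k1])
  show "sym_on (blk k n) Y" "\<forall>r<k. \<forall>i j. {i, j} \<in> E \<longrightarrow> Y (r, i) (r, j) = 0"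
    "\<forall>i<n. \<forall>r<k. \<forall>l<k. r \<noteq> l \<longrightarrow> Y (r, i) (l, i) = 0" "\<forall>a\<in>blk k n. \<forall>b\<in>blk k n. 0 \<le> Y a b"
    "psd_on (bidx (blk k n)) (bordered (\<lambda>a. Y a a) Y)"
    "\<forall>i<n. \<forall>j<n. j < i \<longrightarrow> 0 \<le> 1 - ZY k Y i i - ZY k Y j j + SY k Y i j"
    using F unfolding feasP2_def ZY_def SY_def by auto
  show "\<forall>i<n. \<forall>j<n. i \<noteq> j \<longrightarrow> 0 \<le> ZY k Y i i - SY k Y i j"
  proof (intro allI impI)
    fix i j assume ij: "i < n" "j < n" "i \<noteq> j"
    have "ZY k Y i i - SY k Y i j = (\<Sum>l<k. Y (l, i) (l, i) - (\<Sum>r<k. Y (r, i) (l, j)))"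
    proof -
      have "SY k Y i j = (\<Sum>l<k. \<Sum>r<k. Y (r, i) (l, j))" unfolding SY_def by (rule sum.swap)
      then show ?thesis unfolding ZY_def by (simp add: sum_subtractf)
    qed
    also have "\<dots> \<ge> 0" using F ij unfolding feasP2_def by (intro sum_nonneg) auto
    finally show "0 \<le> ZY k Y i i - SY k Y i j" .
  qed
qed

lemma P1_R1:
  assumes k1: "1 \<le> k" and F: "feasP1 n E k Y"
  shows "feasR1 n E k (ZY k Y) (XY k Y) \<and> objZ n (ZY k Y) = objY n k Y"
proof -
  let ?J = "bidx (blk (k+1) n)" and ?M = "bordered (\<lambda>a. Y a a) Y"
  have psd: "psd_on ?J ?M" and sym: "sym_on (blk (k+1) n) Y"
    and off: "\<forall>i<n. \<forall>r<k+1. \<forall>l<k+1. r \<noteq> l \<longrightarrow> Y (r, i) (l, i) = 0"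
    and one: "\<forall>i<n. (\<Sum>r<k+1. Y (r, i) (r, i)) = 1"
    and nn: "\<forall>a\<in>blk (k+1) n. \<forall>b\<in>blk (k+1) n. 0 \<le> Y a b"
    using F unfolding feasP1_def by auto
  have Ysym: "Y (r, i) (l, j) = Y (l, j) (r, i)" if "r < k+1" "l < k+1" "i < n" "j < n" for r l i j
    using sym that unfolding sym_on_def by auto
  have Yent: "bf ?J ?M (dl (Some (r, i))) (dl (Some (l, j))) = Y (r, i) (l, j)"
    if "r < k+1" "l < k+1" "i < n" "j < n" for r l i j
    using that by (simp add: bf_dl_dl)
  have row: "(\<Sum>l<k+1. Y (r, i) (l, j)) = Y (r, i) (r, i)" if ri: "r < k+1" "i < n" "j < n" for r i j
  proof -
    define w where "w = (\<lambda>x. (\<Sum>l<k+1. dl (Some (l, j)) x) - dl None x)"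
    have diagsum: "(\<Sum>l<k+1. \<Sum>m<k+1. Y (l, j) (m, j)) = 1"
    proof -
      have "(\<Sum>l<k+1. \<Sum>m<k+1. Y (l, j) (m, j)) = (\<Sum>l<k+1. \<Sum>m<k+1. if l = m then Y (l, j) (l, j) else 0)"
        using off ri by (intro sum.cong refl) auto
      also have "\<dots> = 1" using one ri by simp
      finally show ?thesis .
    qed
    have "bf ?J ?M w w = (\<Sum>l<k+1. \<Sum>m<k+1. Y (l, j) (m, j)) - (\<Sum>l<k+1. Y (l, j) (l, j))
        - (\<Sum>l<k+1. Y (l, j) (l, j)) + 1"
    proof -
      have a: "bf ?J ?M (\<lambda>x. \<Sum>l<k+1. dl (Some (l, j)) x) (\<lambda>x. \<Sum>l<k+1. dl (Some (l, j)) x)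
          = (\<Sum>l<k+1. \<Sum>m<k+1. Y (l, j) (m, j))"
        unfolding bf_sum_left bf_sum_right using ri by (intro sum.cong refl) (simp add: bf_dl_dl)
      have b: "bf ?J ?M (\<lambda>x. \<Sum>l<k+1. dl (Some (l, j)) x) (dl None) = (\<Sum>l<k+1. Y (l, j) (l, j))"
        unfolding bf_sum_left using ri by (intro sum.cong refl) (simp add: bf_dl_dl)
      have c: "bf ?J ?M (dl None) (\<lambda>x. \<Sum>l<k+1. dl (Some (l, j)) x) = (\<Sum>l<k+1. Y (l, j) (l, j))"
        unfolding bf_sum_right using ri by (intro sum.cong refl) (simp add: bf_dl_dl)
      have d: "bf ?J ?M (dl None) (dl None) = 1" by (simp add: bf_dl_dl)
      show ?thesis unfolding w_def bf_diff_left bf_diff_right a b c d by simp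
    qed
    moreover have "(\<Sum>l<k+1. Y (l, j) (l, j)) = 1" using one ri by blast
    ultimately have "bf ?J ?M w w = 0" using diagsum by linarith
    from null_vec[OF _ psd _ this, of "Some (r, i)"] ri
    have "bf ?J ?M (dl (Some (r, i))) w = 0" by simp
    moreover have "bf ?J ?M (dl (Some (r, i))) w = (\<Sum>l<k+1. Y (r, i) (l, j)) - Y (r, i) (r, i)"
    proof -
      have "bf ?J ?M (dl (Some (r, i))) (\<lambda>x. \<Sum>l<k+1. dl (Some (l, j)) x) = (\<Sum>l<k+1. Y (r, i) (l, j))"
        unfolding bf_sum_right using ri by (intro sum.cong refl) (simp add: bf_dl_dl)
      moreover have "bf ?J ?M (dl (Some (r, i))) (dl None) = Y (r, i) (r, i)" using ri by (simp add: bf_dl_dl)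
      ultimately show ?thesis unfolding w_def bf_diff_right by simp
    qed
    ultimately show ?thesis by simp
  qed
  show ?thesis
  proof (rule core_R1[OF k1])
    show "sym_on (blk k n) Y" using sym unfolding sym_on_def by auto
    show "\<forall>r<k. \<forall>i j. {i, j} \<in> E \<longrightarrow> Y (r, i) (r, j) = 0" using F unfolding feasP1_def by auto
    show "\<forall>i<n. \<forall>r<k. \<forall>l<k. r \<noteq> l \<longrightarrow> Y (r, i) (l, i) = 0" using off by auto
    show "\<forall>a\<in>blk k n. \<forall>b\<in>blk k n. 0 \<le> Y a b" using nn unfolding blk_def by auto
    show "psd_on (bidx (blk k n)) ?M"
      by (rule psd_sub[OF psd]) (auto simp: bidx_def blk_def)
    have rowk: "(\<Sum>l<k. Y (r, i) (l, j)) + Y (r, i) (k, j) = Y (r, i) (r, i)"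
      if "r < k+1" "i < n" "j < n" for r i j
      using row[OF that] by simp
    have sA: "SY k Y i j + (\<Sum>r<k. Y (r, i) (k, j)) = ZY k Y i i" if "i < n" "j < n" for i j
    proof -
      have "SY k Y i j + (\<Sum>r<k. Y (r, i) (k, j)) = (\<Sum>r<k. (\<Sum>l<k. Y (r, i) (l, j)) + Y (r, i) (k, j))"
        unfolding SY_def by (simp add: sum.distrib)
      also have "\<dots> = ZY k Y i i" unfolding ZY_def using rowk that by (intro sum.cong refl) auto
      finally show ?thesis .
    qed
    have sB: "SY k Y i j + (\<Sum>l<k. Y (l, j) (k, i)) = ZY k Y j j" if "i < n" "j < n" for i j
    proof -
      have "(\<Sum>l<k. \<Sum>r<k. Y (l, j) (r, i)) = SY k Y i j"
      proof -
        have "(\<Sum>l<k. \<Sum>r<k. Y (l, j) (r, i)) = (\<Sum>l<k. \<Sum>r<k. Y (r, i) (l, j))"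
          using Ysym that by (intro sum.cong refl) auto
        also have "\<dots> = SY k Y i j" unfolding SY_def by (rule sum.swap)
        finally show ?thesis .
      qed
      moreover have "(\<Sum>l<k. \<Sum>r<k. Y (l, j) (r, i)) + (\<Sum>l<k. Y (l, j) (k, i)) = ZY k Y j j"
      proof -
        have "(\<Sum>l<k. \<Sum>r<k. Y (l, j) (r, i)) + (\<Sum>l<k. Y (l, j) (k, i)) = (\<Sum>l<k. (\<Sum>r<k. Y (l, j) (r, i)) + Y (l, j) (k, i))"
          by (simp add: sum.distrib)
        also have "\<dots> = ZY k Y j j" unfolding ZY_def using rowk that by (intro sum.cong refl) auto
        finally show ?thesis .
      qed
      ultimately show ?thesis by simp
    qed
    show "\<forall>i<n. \<forall>j<n. i \<noteq> j \<longrightarrow> 0 \<le> ZY k Y i i - SY k Y i j"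
    proof (intro allI impI)
      fix i j assume "i < n" "j < n" "i \<noteq> j"
      moreover have "0 \<le> (\<Sum>r<k. Y (r, i) (k, j))" using nn \<open>i < n\<close> \<open>j < n\<close> by (intro sum_nonneg) auto
      ultimately show "0 \<le> ZY k Y i i - SY k Y i j" using sA by force
    qed
    show "\<forall>i<n. \<forall>j<n. j < i \<longrightarrow> 0 \<le> 1 - ZY k Y i i - ZY k Y j j + SY k Y i j"
    proof (intro allI impI)
      fix i j assume ij: "i < n" "j < n" "j < i"
      have rK: "(\<Sum>l<k. Y (k, i) (l, j)) + Y (k, i) (k, j) = Y (k, i) (k, i)" using rowk[of k i j] ij by simp
      have "(\<Sum>l<k. Y (k, i) (l, j)) = (\<Sum>l<k. Y (l, j) (k, i))" using Ysym ij by (intro sum.cong refl) auto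
      moreover have "Y (k, i) (k, i) = 1 - ZY k Y i i"
      proof -
        have h: "(\<Sum>r<k. Y (r, i) (r, i)) + Y (k, i) (k, i) = 1" using one ij by simp
        then show ?thesis unfolding ZY_def by linarith
      qed
      moreover have "0 \<le> Y (k, i) (k, j)" using nn ij by auto
      ultimately show "0 \<le> 1 - ZY k Y i i - ZY k Y j j + SY k Y i j" using rK sB[OF ij(1,2)] by linarith
    qed
  qed
qed

lemma bf_divide_left: "bf J M (\<lambda>x. u x / c) w = bf J M u w / c"
  using bf_scale_left[where c = "1 / c" and J = J and M = M and u = u and w = w] by simp
lemma bf_divide_right: "bf J M w (\<lambda>x. u x / c) = bf J M w u / c"
  using bf_scale_right[where c = "1 / c" and J = J and M = M and u = u and w = w] by simp

lemma sum_if_eq1: assumes "c < k" shows "(\<Sum>x<k. if x = c then a else b) = a + (real k - 1) * (b::real)"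
proof -
  have "(\<Sum>x<k. if x = c then a else b) = (\<Sum>x<k. (if x = c then a - b else 0) + b)"
    by (intro sum.cong refl) auto
  also have "\<dots> = a - b + real k * b" using assms by (simp add: sum.distrib)
  finally show ?thesis by (simp add: algebra_simps)
qed
lemma sum_if_eq2: assumes "c < k" shows "(\<Sum>x<k. if c = x then a else b) = a + (real k - 1) * (b::real)"
  using sum_if_eq1[OF assms, of a b] by (simp add: eq_commute)

definition Y2 :: "nat \<Rightarrow> (nat \<Rightarrow> nat \<Rightarrow> real) \<Rightarrow> (nat \<Rightarrow> nat \<Rightarrow> real) \<Rightarrow> nat \<times> nat \<Rightarrow> nat \<times> nat \<Rightarrow> real" where
  "Y2 k Z X a b = (if fst a = fst b then Z (snd a) (snd b) else X (snd a) (snd b)) / real k"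

lemma Y2_simp: "Y2 k Z X (r, i) (l, j) = (if r = l then Z i j else X i j) / real k"
  unfolding Y2_def by simp

lemma Y2_sums:
  assumes k1: "1 \<le> k"
  shows "(\<Sum>r<k. Y2 k Z X (r, i) (r, i)) = Z i i"
    and "l < k \<Longrightarrow> (\<Sum>r<k. Y2 k Z X (r, i) (l, j)) = (Z i j + (real k - 1) * X i j) / real k"
    and "r < k \<Longrightarrow> (\<Sum>l<k. Y2 k Z X (r, i) (l, j)) = (Z i j + (real k - 1) * X i j) / real k"
    and "(\<Sum>r<k. \<Sum>l<k. Y2 k Z X (r, i) (l, j)) = Z i j + (real k - 1) * X i j"
proof -
  have kp: "real k \<noteq> 0" using k1 by simp
  show "(\<Sum>r<k. Y2 k Z X (r, i) (r, i)) = Z i i" using kp by (simp add: Y2_simp)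
  have A: "l < k \<Longrightarrow> (\<Sum>r<k. Y2 k Z X (r, i) (l, j)) = (Z i j + (real k - 1) * X i j) / real k" for l
    unfolding Y2_simp by (simp add: sum_divide_distrib[symmetric] sum_if_eq1)
  show "l < k \<Longrightarrow> (\<Sum>r<k. Y2 k Z X (r, i) (l, j)) = (Z i j + (real k - 1) * X i j) / real k" by (rule A)
  have B: "r < k \<Longrightarrow> (\<Sum>l<k. Y2 k Z X (r, i) (l, j)) = (Z i j + (real k - 1) * X i j) / real k" for r
    unfolding Y2_simp by (simp add: sum_divide_distrib[symmetric] sum_if_eq2)
  show "r < k \<Longrightarrow> (\<Sum>l<k. Y2 k Z X (r, i) (l, j)) = (Z i j + (real k - 1) * X i j) / real k" by (rule B)
  have "(\<Sum>r<k. \<Sum>l<k. Y2 k Z X (r, i) (l, j)) = (\<Sum>r<k. (Z i j + (real k - 1) * X i j) / real k)"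
    using B by (intro sum.cong refl) auto
  also have "\<dots> = Z i j + (real k - 1) * X i j" using kp by simp
  finally show "(\<Sum>r<k. \<Sum>l<k. Y2 k Z X (r, i) (l, j)) = Z i j + (real k - 1) * X i j" .
qed

lemma coef_sum:
  assumes "1 \<le> k" "l < k" "m < k"
  shows "(\<Sum>r<k. ((if l = r then 1 else 0) - 1 / real k) * ((if m = r then 1 else 0) - 1 / real k))
       = (if l = m then 1 else 0) - 1 / real k"
proof -
  have kp: "real k \<noteq> 0" using assms by simp
  have "(\<Sum>r<k. ((if l = r then 1 else 0) - 1 / real k) * ((if m = r then 1 else 0) - 1 / real k))
     = (\<Sum>r<k. (if l = r then (if m = r then 1 else 0) else 0) - (if l = r then 1 / real k else 0)
          - (if m = r then 1 / real k else 0) + 1 / (real k * real k))"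
    by (intro sum.cong refl) (auto simp: field_simps)
  also have "\<dots> = (if l = m then 1 else 0) - 1 / real k - 1 / real k + real k / (real k * real k)"
    using assms by (simp add: sum.distrib sum_subtractf)
  also have "\<dots> = (if l = m then 1 else 0) - 1 / real k" using kp by simp
  finally show ?thesis .
qed

lemma R1_P2:
  assumes k1: "1 \<le> k" and F: "feasR1 n E k Z X"
  shows "feasP2 n E k (Y2 k Z X) \<and> objY n k (Y2 k Z X) = objZ n Z"
proof -
  have kp: "real k > 0" using k1 by simp
  have symZ: "sym_on {..<n} Z" and symX: "sym_on {..<n} X" and edge: "\<forall>i j. {i, j} \<in> E \<longrightarrow> Z i j = 0"
    and Xd: "\<forall>i<n. X i i = 0" and nn: "\<forall>i<n. \<forall>j<n. 0 \<le> Z i j \<and> 0 \<le> X i j"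
    and psdW: "psd_on {..<n} (\<lambda>i j. Z i j - X i j)"
    and psdB: "psd_on (bidx {..<n}) (bordered (\<lambda>i. Z i i) (\<lambda>i j. Z i j + (real k - 1) * X i j))"
    and ia: "\<forall>i<n. \<forall>j<n. j < i \<longrightarrow> 0 \<le> 1 - Z i i - Z j j + Z i j + (real k - 1) * X i j"
    and ib: "\<forall>i<n. \<forall>j<n. i \<noteq> j \<longrightarrow> 0 \<le> Z i i - Z i j - (real k - 1) * X i j"
    using F unfolding feasR1_def by auto
  let ?Y = "Y2 k Z X"
  have symY: "sym_on (blk k n) ?Y" unfolding sym_on_def
  proof (intro ballI)
    fix a b assume "a \<in> blk k n" "b \<in> blk k n"
    then have "snd a < n" "snd b < n" unfolding blk_def by auto
    then have "Z (snd a) (snd b) = Z (snd b) (snd a)" "X (snd a) (snd b) = X (snd b) (snd a)"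
      using symZ symX unfolding sym_on_def by auto
    then show "?Y a b = ?Y b a" unfolding Y2_def by auto
  qed
  let ?J1 = "bidx {..<n}" and ?M1 = "bordered (\<lambda>i. Z i i) (\<lambda>i j. Z i j + (real k - 1) * X i j)"
  let ?W = "\<lambda>i j. Z i j - X i j"
  let ?I = "bidx (blk k n)"
  define L1 :: "(nat \<times> nat) option \<Rightarrow> nat option \<Rightarrow> real" where "L1 = (\<lambda>\<alpha>. case \<alpha> of None \<Rightarrow> dl None | Some (l, i) \<Rightarrow> (\<lambda>x. (1 / real k) * dl (Some i) x))"
  define L2 :: "nat \<Rightarrow> (nat \<times> nat) option \<Rightarrow> nat \<Rightarrow> real" where "L2 = (\<lambda>r \<alpha>. case \<alpha> of None \<Rightarrow> (\<lambda>x. 0)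
      | Some (l, i) \<Rightarrow> (\<lambda>x. ((if l = r then 1 else 0) - 1 / real k) * dl i x))"
  define N1 where "N1 = (\<lambda>\<alpha> \<beta>. bf ?J1 ?M1 (L1 \<alpha>) (L1 \<beta>))"
  define N2 where "N2 = (\<lambda>\<alpha> \<beta>. \<Sum>r<k. (1 / real k) * bf {..<n} ?W (L2 r \<alpha>) (L2 r \<beta>))"
  have sM1: "sym_on ?J1 ?M1" using psdB unfolding psd_bf by blast
  have sW: "sym_on {..<n} ?W" using psdW unfolding psd_bf by blast
  have symN1: "sym_on ?I N1" unfolding N1_def sym_on_def using bf_sym[OF sM1] by blast
  have symN2: "sym_on ?I N2" unfolding N2_def sym_on_def using bf_sym[OF sW] by simp
  have p1: "psd_on ?I N1" by (rule psd_congr[OF _ psdB symN1]) (auto simp: N1_def)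
  have p2: "psd_on ?I N2" by (rule psd_congr_sum[OF _ psdW symN2, of "{..<k}" "\<lambda>_. 1 / real k" L2]) (auto simp: N2_def)
  have psdY: "psd_on ?I (bordered (\<lambda>a. ?Y a a) ?Y)"
  proof (rule psd_cong[OF psd_add[OF p1 p2]])
    fix \<alpha> \<beta> assume ab: "\<alpha> \<in> ?I" "\<beta> \<in> ?I"
    show "N1 \<alpha> \<beta> + N2 \<alpha> \<beta> = bordered (\<lambda>a. ?Y a a) ?Y \<alpha> \<beta>"
    proof (cases \<alpha>)
      case None
      show ?thesis
      proof (cases \<beta>)
        case None
        then show ?thesis using \<open>\<alpha> = None\<close> by (simp add: N1_def N2_def L1_def L2_def bf_dl_dl bf_zero_left)
      next
        case (Some b)
        obtain m j where b: "b = (m, j)" by fastforce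
        have mj: "m < k" "j < n" using ab Some b by (auto simp: bidx_def)
        have "N1 \<alpha> \<beta> = Z j j / real k" using None Some b mj
          by (simp add: N1_def L1_def bf_scale_right bf_divide_right bf_dl_dl)
        moreover have "N2 \<alpha> \<beta> = 0" using None by (simp add: N2_def L2_def bf_zero_left)
        ultimately show ?thesis using None Some b by (simp add: Y2_simp)
      qed
    next
      case (Some a)
      obtain l i where a: "a = (l, i)" by fastforce
      have li: "l < k" "i < n" using ab Some a by (auto simp: bidx_def)
      show ?thesis
      proof (cases \<beta>)
        case None
        have "N1 \<alpha> \<beta> = Z i i / real k" using None Some a li
          by (simp add: N1_def L1_def bf_scale_left bf_divide_left bf_dl_dl)
        moreover have "N2 \<alpha> \<beta> = 0" using None by (simp add: N2_def L2_def bf_zero_right)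
        ultimately show ?thesis using None Some a by (simp add: Y2_simp)
      next
        case (Some b)
        obtain m j where b: "b = (m, j)" by fastforce
        have mj: "m < k" "j < n" using ab Some b by (auto simp: bidx_def)
        have e1: "N1 \<alpha> \<beta> = (Z i j + (real k - 1) * X i j) / (real k * real k)"
          using \<open>\<alpha> = Some a\<close> a Some b li mj
          by (simp add: N1_def L1_def bf_scale_left bf_scale_right bf_divide_left bf_divide_right bf_dl_dl)
        have e2: "N2 \<alpha> \<beta> = (Z i j - X i j) / real k * ((if l = m then 1 else 0) - 1 / real k)"
        proof -
          have "N2 \<alpha> \<beta> = (\<Sum>r<k. (1 / real k) * (((if l = r then 1 else 0) - 1 / real k) *
               ((if m = r then 1 else 0) - 1 / real k) * (Z i j - X i j)))"
            using \<open>\<alpha> = Some a\<close> a Some b li mj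
            by (simp add: N2_def L2_def bf_scale_left bf_scale_right bf_divide_left bf_divide_right bf_dl_dl mult.assoc)
          also have "\<dots> = (Z i j - X i j) / real k * (\<Sum>r<k. ((if l = r then 1 else 0) - 1 / real k) *
               ((if m = r then 1 else 0) - 1 / real k))"
            by (simp add: sum_distrib_left mult_ac)
          finally show ?thesis using coef_sum[OF k1 li(1) mj(1)] by simp
        qed
        have kk: "real k \<noteq> 0" using kp by simp
        show ?thesis unfolding e1 e2 using \<open>\<alpha> = Some a\<close> a Some b kk
          by (cases "l = m") (simp_all add: Y2_simp field_simps)
      qed
    qed
  qed
  have feas: "feasP2 n E k ?Y"
    unfolding feasP2_def
  proof (intro conjI)
    show "sym_on (blk k n) ?Y" by (rule symY)
    show "\<forall>r<k. \<forall>i j. {i, j} \<in> E \<longrightarrow> ?Y (r, i) (r, j) = 0" using edge by (simp add: Y2_simp)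
    show "\<forall>i<n. \<forall>r<k. \<forall>l<k. r \<noteq> l \<longrightarrow> ?Y (r, i) (l, i) = 0" using Xd by (simp add: Y2_simp)
    show "\<forall>a\<in>blk k n. \<forall>b\<in>blk k n. 0 \<le> ?Y a b" using nn unfolding blk_def Y2_def by auto
    show "psd_on ?I (bordered (\<lambda>a. ?Y a a) ?Y)" by (rule psdY)
    show "\<forall>i<n. \<forall>j<n. j < i \<longrightarrow> 0 \<le> 1 - (\<Sum>r<k. ?Y (r, i) (r, i)) - (\<Sum>r<k. ?Y (r, j) (r, j))
               + (\<Sum>r<k. \<Sum>l<k. ?Y (r, i) (l, j))"
      using ia k1 by (simp add: Y2_sums[OF k1] add.assoc)
    show "\<forall>i<n. \<forall>j<n. i \<noteq> j \<longrightarrow> (\<forall>l<k. 0 \<le> ?Y (l, i) (l, i) - (\<Sum>r<k. ?Y (r, i) (l, j)))"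
    proof (intro allI impI)
      fix i j l assume "i < n" "j < n" "i \<noteq> j" "l < k"
      then have "0 \<le> (Z i i - Z i j - (real k - 1) * X i j) / real k" using ib kp by simp
      then show "0 \<le> ?Y (l, i) (l, i) - (\<Sum>r<k. ?Y (r, i) (l, j))"
        using Y2_sums(2)[OF k1 \<open>l < k\<close>] by (simp add: Y2_simp diff_divide_distrib add_divide_distrib)
    qed
  qed
  have "objY n k ?Y = (\<Sum>i<n. \<Sum>r<k. ?Y (r, i) (r, i))" unfolding objY_def by (rule sum.swap)
  also have "\<dots> = objZ n Z" unfolding objZ_def using Y2_sums(1)[OF k1] by simp
  finally show ?thesis using feas by simp
qed

definition Y1 :: "nat \<Rightarrow> (nat \<Rightarrow> nat \<Rightarrow> real) \<Rightarrow> (nat \<Rightarrow> nat \<Rightarrow> real) \<Rightarrow> nat \<times> nat \<Rightarrow> nat \<times> nat \<Rightarrow> real" where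
  "Y1 k Z X a b = (if fst a < k \<and> fst b < k then Y2 k Z X a b
     else if fst a < k then (Z (snd a) (snd a) - Z (snd a) (snd b) - (real k - 1) * X (snd a) (snd b)) / real k
     else if fst b < k then (Z (snd b) (snd b) - Z (snd a) (snd b) - (real k - 1) * X (snd a) (snd b)) / real k
     else 1 - Z (snd a) (snd a) - Z (snd b) (snd b) + Z (snd a) (snd b) + (real k - 1) * X (snd a) (snd b))"

lemma Y1_simps:
  "r < k \<Longrightarrow> l < k \<Longrightarrow> Y1 k Z X (r, i) (l, j) = Y2 k Z X (r, i) (l, j)"
  "r < k \<Longrightarrow> Y1 k Z X (r, i) (k, j) = (Z i i - Z i j - (real k - 1) * X i j) / real k"
  "l < k \<Longrightarrow> Y1 k Z X (k, i) (l, j) = (Z j j - Z i j - (real k - 1) * X i j) / real k"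
  "Y1 k Z X (k, i) (k, j) = 1 - Z i i - Z j j + Z i j + (real k - 1) * X i j"
  unfolding Y1_def by auto

lemma R1_P1:
  assumes k1: "1 \<le> k" and F: "feasR1 n E k Z X"
  shows "feasP1 n E k (Y1 k Z X) \<and> objY n k (Y1 k Z X) = objZ n Z"
proof -
  have kp: "real k > 0" using k1 by simp
  have symZ: "sym_on {..<n} Z" and symX: "sym_on {..<n} X" and edge: "\<forall>i j. {i, j} \<in> E \<longrightarrow> Z i j = 0"
    and Xd: "\<forall>i<n. X i i = 0" and nn: "\<forall>i<n. \<forall>j<n. 0 \<le> Z i j \<and> 0 \<le> X i j"
    and psdB: "psd_on (bidx {..<n}) (bordered (\<lambda>i. Z i i) (\<lambda>i j. Z i j + (real k - 1) * X i j))"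
    and ia: "\<forall>i<n. \<forall>j<n. j < i \<longrightarrow> 0 \<le> 1 - Z i i - Z j j + Z i j + (real k - 1) * X i j"
    and ib: "\<forall>i<n. \<forall>j<n. i \<noteq> j \<longrightarrow> 0 \<le> Z i i - Z i j - (real k - 1) * X i j"
    using F unfolding feasR1_def by auto
  have Zs: "Z i j = Z j i" "X i j = X j i" if "i < n" "j < n" for i j
    using symZ symX that unfolding sym_on_def by auto
  have P2: "feasP2 n E k (Y2 k Z X)" and obj2: "objY n k (Y2 k Z X) = objZ n Z"
    using R1_P2[OF k1 F] by auto
  let ?Y = "Y1 k Z X" and ?Y2 = "Y2 k Z X"
  let ?J = "bidx (blk k n)" and ?M = "bordered (\<lambda>a. ?Y2 a a) ?Y2"
  have psd2: "psd_on ?J ?M" using P2 unfolding feasP2_def by auto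
  have Zle1: "Z i i \<le> 1" if "i < n" for i
  proof -
    let ?J1 = "bidx {..<n}" and ?M1 = "bordered (\<lambda>i. Z i i) (\<lambda>i j. Z i j + (real k - 1) * X i j)"
    have "0 \<le> bf ?J1 ?M1 (\<lambda>x. dl (Some i) x - dl None x) (\<lambda>x. dl (Some i) x - dl None x)"
      using psdB unfolding psd_bf by auto
    also have "\<dots> = Z i i - Z i i - Z i i + 1"
      using that Xd by (simp add: bf_diff_left bf_diff_right bf_dl_dl)
    finally show ?thesis by simp
  qed
  have symY: "sym_on (blk (k+1) n) ?Y" unfolding sym_on_def
  proof (intro ballI)
    fix a b assume ab: "a \<in> blk (k+1) n" "b \<in> blk (k+1) n"
    obtain r i where a: "a = (r, i)" by fastforce
    obtain l j where b: "b = (l, j)" by fastforce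
    have ri: "r \<le> k" "i < n" "l \<le> k" "j < n" using ab a b by auto
    show "?Y a b = ?Y b a" using Zs[OF ri(2) ri(4)] unfolding a b Y1_def Y2_def by auto
  qed
  define Lk :: "nat \<Rightarrow> (nat \<times> nat) option \<Rightarrow> real" where "Lk = (\<lambda>i x. dl None x - (\<Sum>l<k. dl (Some (l, i)) x))"
  define L3 :: "(nat \<times> nat) option \<Rightarrow> (nat \<times> nat) option \<Rightarrow> real" where "L3 = (\<lambda>\<alpha>. case \<alpha> of None \<Rightarrow> dl None | Some (r, i) \<Rightarrow> (if r < k then dl (Some (r, i)) else Lk i))"
  have NN: "bf ?J ?M (dl None) (dl None) = 1" by (simp add: bf_dl_dl)
  have NS: "bf ?J ?M (dl None) (dl (Some (r, j))) = Z j j / real k" if "r < k" "j < n" for r j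
    using that by (simp add: bf_dl_dl Y2_simp)
  have SN: "bf ?J ?M (dl (Some (r, j))) (dl None) = Z j j / real k" if "r < k" "j < n" for r j
    using that by (simp add: bf_dl_dl Y2_simp)
  have SS: "bf ?J ?M (dl (Some (r, i))) (dl (Some (l, j))) = ?Y2 (r, i) (l, j)" if "r < k" "l < k" "i < n" "j < n" for r l i j
    using that by (simp add: bf_dl_dl)
  have sumN: "bf ?J ?M (dl None) (\<lambda>x. \<Sum>l<k. dl (Some (l, j)) x) = Z j j" if "j < n" for j
  proof -
    have "bf ?J ?M (dl None) (\<lambda>x. \<Sum>l<k. dl (Some (l, j)) x) = (\<Sum>l<k. ?Y2 (l, j) (l, j))"
      unfolding bf_sum_right using that by (intro sum.cong refl) (simp add: bf_dl_dl)
    then show ?thesis using Y2_sums(1)[OF k1] by simp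
  qed
  have sumN': "bf ?J ?M (\<lambda>x. \<Sum>l<k. dl (Some (l, j)) x) (dl None) = Z j j" if "j < n" for j
  proof -
    have "bf ?J ?M (\<lambda>x. \<Sum>l<k. dl (Some (l, j)) x) (dl None) = (\<Sum>l<k. ?Y2 (l, j) (l, j))"
      unfolding bf_sum_left using that by (intro sum.cong refl) (simp add: bf_dl_dl)
    then show ?thesis using Y2_sums(1)[OF k1] by simp
  qed
  have sumS: "bf ?J ?M (dl (Some (r, i))) (\<lambda>x. \<Sum>l<k. dl (Some (l, j)) x) = (Z i j + (real k - 1) * X i j) / real k"
    if "r < k" "i < n" "j < n" for r i j
  proof -
    have "bf ?J ?M (dl (Some (r, i))) (\<lambda>x. \<Sum>l<k. dl (Some (l, j)) x) = (\<Sum>l<k. ?Y2 (r, i) (l, j))"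
      unfolding bf_sum_right using that by (intro sum.cong refl) (simp add: bf_dl_dl)
    then show ?thesis using Y2_sums(3)[OF k1 that(1)] by simp
  qed
  have sumS': "bf ?J ?M (\<lambda>x. \<Sum>r<k. dl (Some (r, i)) x) (dl (Some (l, j))) = (Z i j + (real k - 1) * X i j) / real k"
    if "l < k" "i < n" "j < n" for l i j
  proof -
    have "bf ?J ?M (\<lambda>x. \<Sum>r<k. dl (Some (r, i)) x) (dl (Some (l, j))) = (\<Sum>r<k. ?Y2 (r, i) (l, j))"
      unfolding bf_sum_left using that by (intro sum.cong refl) (simp add: bf_dl_dl)
    then show ?thesis using Y2_sums(2)[OF k1 that(1)] by simp
  qed
  have sumSS: "bf ?J ?M (\<lambda>x. \<Sum>r<k. dl (Some (r, i)) x) (\<lambda>x. \<Sum>l<k. dl (Some (l, j)) x) = Z i j + (real k - 1) * X i j"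
    if "i < n" "j < n" for i j
  proof -
    have "bf ?J ?M (\<lambda>x. \<Sum>r<k. dl (Some (r, i)) x) (\<lambda>x. \<Sum>l<k. dl (Some (l, j)) x) = (\<Sum>r<k. \<Sum>l<k. ?Y2 (r, i) (l, j))"
      unfolding bf_sum_left bf_sum_right using that by (intro sum.cong refl) (simp add: bf_dl_dl)
    then show ?thesis using Y2_sums(4)[OF k1] by simp
  qed
  have kk: "real k \<noteq> 0" using kp by simp
  have psdY: "psd_on (bidx (blk (k+1) n)) (bordered (\<lambda>a. ?Y a a) ?Y)"
  proof (rule psd_congr[OF _ psd2, where L = L3])
    show "sym_on (bidx (blk (k+1) n)) (bordered (\<lambda>a. ?Y a a) ?Y)" by (rule sym_bordered[OF symY])
    fix \<alpha> \<beta> assume ab: "\<alpha> \<in> bidx (blk (k+1) n)" "\<beta> \<in> bidx (blk (k+1) n)"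
    show "bordered (\<lambda>a. ?Y a a) ?Y \<alpha> \<beta> = bf ?J ?M (L3 \<alpha>) (L3 \<beta>)"
    proof (cases \<alpha>)
      case None
      show ?thesis
      proof (cases \<beta>)
        case None then show ?thesis using \<open>\<alpha> = None\<close> by (simp add: L3_def NN)
      next
        case (Some b)
        obtain l j where b: "b = (l, j)" by fastforce
        have lj: "l \<le> k" "j < n" using ab Some b by (auto simp: bidx_def)
        show ?thesis
        proof (cases "l < k")
          case True then show ?thesis using None Some b lj by (simp add: L3_def NS Y1_simps Y2_simp)
        next
          case False then have "l = k" using lj by simp
          then show ?thesis using None Some b lj Xd
            by (simp add: L3_def Lk_def Y1_simps bf_diff_right sumN NN)
        qed
      qed
    next
      case (Some a)
      obtain r i where a: "a = (r, i)" by fastforce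
      have ri: "r \<le> k" "i < n" using ab Some a by (auto simp: bidx_def)
      show ?thesis
      proof (cases \<beta>)
        case None
        show ?thesis
        proof (cases "r < k")
          case True then show ?thesis using None Some a ri by (simp add: L3_def SN Y1_simps Y2_simp)
        next
          case False then have "r = k" using ri by simp
          then show ?thesis using None Some a ri Xd
            by (simp add: L3_def Lk_def Y1_simps bf_diff_left sumN' NN)
        qed
      next
        case (Some b)
        obtain l j where b: "b = (l, j)" by fastforce
        have lj: "l \<le> k" "j < n" using ab Some b by (auto simp: bidx_def)
        show ?thesis
        proof (cases "r < k")
          case rk: True
          show ?thesis
          proof (cases "l < k")
            case True then show ?thesis using \<open>\<alpha> = Some a\<close> Some a b ri lj rk by (simp add: L3_def SS Y1_simps)
          next
            case False then have "l = k" using lj by simp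
            then show ?thesis using \<open>\<alpha> = Some a\<close> Some a b ri lj rk kk
              by (simp add: L3_def Lk_def Y1_simps bf_diff_right sumS SN Y2_simp diff_divide_distrib add_divide_distrib)
          qed
        next
          case False then have rk: "r = k" using ri by simp
          show ?thesis
          proof (cases "l < k")
            case True then show ?thesis using \<open>\<alpha> = Some a\<close> Some a b ri lj rk kk
              by (simp add: L3_def Lk_def Y1_simps bf_diff_left sumS' NS Y2_simp diff_divide_distrib add_divide_distrib)
          next
            case False then have "l = k" using lj by simp
            then show ?thesis using \<open>\<alpha> = Some a\<close> Some a b ri lj rk
              by (simp add: L3_def Lk_def Y1_simps bf_diff_left bf_diff_right sumN sumN' sumSS NN)
          qed
        qed
      qed
    qed
  qed simp
  have feas: "feasP1 n E k ?Y"
    unfolding feasP1_def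
  proof (intro conjI)
    show "sym_on (blk (k+1) n) ?Y" by (rule symY)
    show "\<forall>r<k. \<forall>i j. {i, j} \<in> E \<longrightarrow> ?Y (r, i) (r, j) = 0" using edge by (simp add: Y1_simps Y2_simp)
    show "\<forall>i<n. (\<Sum>r<k+1. ?Y (r, i) (r, i)) = 1"
    proof (intro allI impI)
      fix i assume i: "i < n"
      have "(\<Sum>r<k. ?Y (r, i) (r, i)) = (\<Sum>r<k. ?Y2 (r, i) (r, i))" by (intro sum.cong refl) (simp add: Y1_simps)
      then have "(\<Sum>r<k. ?Y (r, i) (r, i)) = Z i i" using Y2_sums(1)[OF k1] by simp
      then show "(\<Sum>r<k+1. ?Y (r, i) (r, i)) = 1" using Xd i by (simp add: Y1_simps)
    qed
    show "\<forall>i<n. \<forall>r<k+1. \<forall>l<k+1. r \<noteq> l \<longrightarrow> ?Y (r, i) (l, i) = 0"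
    proof (intro allI impI)
      fix i r l assume h: "i < n" "r < k+1" "l < k+1" "r \<noteq> l"
      then consider "r < k" "l < k" | "r < k" "l = k" | "r = k" "l < k" by linarith
      then show "?Y (r, i) (l, i) = 0" using h Xd by cases (simp_all add: Y1_simps Y2_simp)
    qed
    show "\<forall>a\<in>blk (k+1) n. \<forall>b\<in>blk (k+1) n. 0 \<le> ?Y a b"
    proof (intro ballI)
      fix a b assume ab: "a \<in> blk (k+1) n" "b \<in> blk (k+1) n"
      obtain r i where a: "a = (r, i)" by fastforce
      obtain l j where b: "b = (l, j)" by fastforce
      have h: "r < k+1" "i < n" "l < k+1" "j < n" using ab a b by auto
      have KK: "0 \<le> 1 - Z i i - Z j j + Z i j + (real k - 1) * X i j"
      proof (cases "j < i")
        case True then show ?thesis using ia h by auto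
      next
        case False
        show ?thesis
        proof (cases "i = j")
          case True then show ?thesis using Zle1 h Xd by simp
        next
          case False then have "i < j" using \<open>\<not> j < i\<close> by simp
          then have "0 \<le> 1 - Z j j - Z i i + Z j i + (real k - 1) * X j i" using ia h by auto
          then show ?thesis using Zs[OF h(2) h(4)] by simp
        qed
      qed
      have RK: "0 \<le> Z i i - Z i j - (real k - 1) * X i j"
        using ib h Xd by (cases "i = j") auto
      have KR: "0 \<le> Z j j - Z i j - (real k - 1) * X i j"
        using ib[rule_format, of j i] h Xd Zs[OF h(2) h(4)] by (cases "i = j") auto
      consider "r < k" "l < k" | "r < k" "l = k" | "r = k" "l < k" | "r = k" "l = k" using h by linarith
      then show "0 \<le> ?Y a b"
      proof cases
        case 1 then show ?thesis using nn h kp a b by (simp add: Y1_simps Y2_simp)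
      next
        case 2 then show ?thesis using RK kp a b by (simp add: Y1_simps)
      next
        case 3 then show ?thesis using KR kp a b by (simp add: Y1_simps)
      next
        case 4 then show ?thesis using KK a b by (simp add: Y1_simps)
      qed
    qed
    show "psd_on (bidx (blk (k+1) n)) (bordered (\<lambda>a. ?Y a a) ?Y)" by (rule psdY)
  qed
  have "objY n k ?Y = objY n k ?Y2" unfolding objY_def by (intro sum.cong refl) (simp add: Y1_simps)
  then show ?thesis using feas obj2 by simp
qed

lemma bf_bordered:
  assumes "finite I"
  shows "bf (bidx I) (bordered d M) x x = x None * x None + 2 * x None * (\<Sum>i\<in>I. d i * x (Some i))
     + bf I M (\<lambda>i. x (Some i)) (\<lambda>i. x (Some i))"
proof -
  have nI: "None \<notin> Some ` I" by auto
  have inj: "inj_on Some I" by simp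
  have "bf (bidx I) (bordered d M) x x = x None * x None + (\<Sum>j\<in>I. x None * d j * x (Some j))
      + ((\<Sum>i\<in>I. x (Some i) * d i * x None) + (\<Sum>i\<in>I. \<Sum>j\<in>I. x (Some i) * M i j * x (Some j)))"
    unfolding bf_def bidx_def using assms nI
    by (simp add: sum.reindex[OF inj] sum.distrib)
  also have "\<dots> = x None * x None + 2 * x None * (\<Sum>i\<in>I. d i * x (Some i))
     + bf I M (\<lambda>i. x (Some i)) (\<lambda>i. x (Some i))"
    unfolding bf_def by (simp add: sum_distrib_left sum.distrib[symmetric] algebra_simps)
  finally show ?thesis .
qed


lemma strict_feas:
  assumes G: "simple_graph n E"
  shows "\<exists>Z X. feasR1 n E k Z X \<and> pd_on {..<n} (\<lambda>i j. Z i j - X i j) \<and>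
        pd_on (bidx {..<n}) (bordered (\<lambda>i. Z i i) (\<lambda>i j. Z i j + (real k - 1) * X i j))"
proof -
  define e :: real where "e = 1 / (real n + 2)"
  have e0: "0 < e" unfolding e_def by simp
  have en: "e * real n < 1" "e \<le> 1 / 2" unfolding e_def by (auto simp: field_simps)
  define Z :: "nat \<Rightarrow> nat \<Rightarrow> real" where "Z = (\<lambda>i j. if i = j then e else 0)"
  define X :: "nat \<Rightarrow> nat \<Rightarrow> real" where "X = (\<lambda>i j. 0)"
  have quad: "(\<Sum>i<n. \<Sum>j<n. v i * M i j * v j) = e * (\<Sum>i<n. v i * v i)"
    if "\<And>i j. M i j = Z i j" for M v
  proof -
    have "(\<Sum>i<n. \<Sum>j<n. v i * M i j * v j) = (\<Sum>i<n. e * (v i * v i))"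
    proof (intro sum.cong refl)
      fix i assume i: "i \<in> {..<n}"
      have "(\<Sum>j<n. v i * M i j * v j) = (\<Sum>j<n. if j = i then e * (v i * v i) else 0)"
        using that by (intro sum.cong refl) (auto simp: Z_def)
      then show "(\<Sum>j<n. v i * M i j * v j) = e * (v i * v i)" using i by simp
    qed
    then show ?thesis by (simp add: sum_distrib_left)
  qed
  have Mz: "(\<lambda>i j. Z i j + (real k - 1) * X i j) = Z" "(\<lambda>i j. Z i j - X i j) = Z"
    unfolding X_def by auto
  have symZ: "sym_on {..<n} Z" unfolding sym_on_def Z_def by auto
  have pdW: "pd_on {..<n} Z"
    unfolding pd_on_def
  proof (intro conjI allI impI)
    show "sym_on {..<n} Z" by (rule symZ)
    fix x :: "nat \<Rightarrow> real" assume "\<exists>i\<in>{..<n}. x i \<noteq> 0"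
    then obtain i0 where i0: "i0 < n" "x i0 \<noteq> 0" by auto
    have "0 < (\<Sum>i<n. x i * x i)"
      by (rule sum_pos2[of "{..<n}" i0]) (use i0 in \<open>auto simp: not_square_less_zero zero_less_mult_iff\<close>)
    then show "0 < (\<Sum>i<n. \<Sum>j<n. x i * Z i j * x j)" using quad[of Z x] e0 by simp
  qed
  have pdB: "pd_on (bidx {..<n}) (bordered (\<lambda>i. Z i i) Z)"
    unfolding pd_on_def
  proof (intro conjI allI impI)
    show "sym_on (bidx {..<n}) (bordered (\<lambda>i. Z i i) Z)" by (rule sym_bordered[OF symZ])
    fix x :: "nat option \<Rightarrow> real" assume nz: "\<exists>i\<in>bidx {..<n}. x i \<noteq> 0"
    let ?t = "x None" and ?v = "\<lambda>i. x (Some i)"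
    have "(\<Sum>a\<in>bidx {..<n}. \<Sum>b\<in>bidx {..<n}. x a * bordered (\<lambda>i. Z i i) Z a b * x b)
        = bf (bidx {..<n}) (bordered (\<lambda>i. Z i i) Z) x x" by (simp add: bf_def)
    also have "\<dots> = ?t * ?t + 2 * ?t * (\<Sum>i<n. e * ?v i) + e * (\<Sum>i<n. ?v i * ?v i)"
    proof -
      have hb: "bf {..<n} Z ?v ?v = e * (\<Sum>i<n. ?v i * ?v i)" using quad[of Z ?v] by (simp add: bf_def)
      have hd: "(\<Sum>i<n. Z i i * ?v i) = (\<Sum>i<n. e * ?v i)" by (simp add: Z_def)
      show ?thesis by (simp only: bf_bordered[OF finite_lessThan] hb hd)
    qed
    also have "\<dots> = e * (\<Sum>i<n. (?v i + ?t) * (?v i + ?t)) + ?t * ?t * (1 - e * real n)"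
      by (simp add: sum.distrib sum_distrib_left algebra_simps)
    finally have eq: "(\<Sum>a\<in>bidx {..<n}. \<Sum>b\<in>bidx {..<n}. x a * bordered (\<lambda>i. Z i i) Z a b * x b)
       = e * (\<Sum>i<n. (?v i + ?t) * (?v i + ?t)) + ?t * ?t * (1 - e * real n)" .
    have s0: "0 \<le> (\<Sum>i<n. (?v i + ?t) * (?v i + ?t))" by (intro sum_nonneg) simp
    show "0 < (\<Sum>a\<in>bidx {..<n}. \<Sum>b\<in>bidx {..<n}. x a * bordered (\<lambda>i. Z i i) Z a b * x b)"
    proof (cases "?t = 0")
      case False
      then have sq: "0 < ?t * ?t" using not_real_square_gt_zero by blast
      have "0 < 1 - e * real n" using en by simp
      with sq have "0 < ?t * ?t * (1 - e * real n)" by (rule mult_pos_pos)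
      moreover have "0 \<le> e * (\<Sum>i<n. (?v i + ?t) * (?v i + ?t))" using e0 s0 by simp
      ultimately show ?thesis unfolding eq by linarith
    next
      case True
      then obtain i0 where i0: "i0 < n" "?v i0 \<noteq> 0" using nz by (auto simp: bidx_def)
      have "0 < (\<Sum>i<n. (?v i + ?t) * (?v i + ?t))"
        by (rule sum_pos2[of "{..<n}" i0]) (use i0 True in \<open>auto simp: zero_less_mult_iff\<close>)
      then show ?thesis unfolding eq using e0 True by simp
    qed
  qed
  have feas: "feasR1 n E k Z X"
    unfolding feasR1_def
  proof (intro conjI)
    show "sym_on {..<n} Z" by (rule symZ)
    show "sym_on {..<n} X" unfolding sym_on_def X_def by simp
    show "\<forall>i j. {i, j} \<in> E \<longrightarrow> Z i j = 0"
    proof (intro allI impI)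
      fix i j assume "{i, j} \<in> E"
      moreover have "\<forall>e\<in>E. \<exists>a b. e = {a, b} \<and> a \<noteq> b \<and> a < n \<and> b < n"
        using G unfolding simple_graph_def by simp
      ultimately have "\<exists>a b. {i, j} = {a, b} \<and> a \<noteq> b \<and> a < n \<and> b < n" by (rule bspec[rotated])
      then obtain a b where "{i, j} = {a, b}" "a \<noteq> b" by auto
      then have "i \<noteq> j" by (cases "i = j") auto
      then show "Z i j = 0" unfolding Z_def by simp
    qed
    show "\<forall>i<n. X i i = 0" unfolding X_def by simp
    show "\<forall>i<n. \<forall>j<n. 0 \<le> Z i j \<and> 0 \<le> X i j" unfolding Z_def X_def using e0 by simp
    show "psd_on {..<n} (\<lambda>i j. Z i j - X i j)" unfolding Mz by (rule pd_psd[OF pdW])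
    show "psd_on (bidx {..<n}) (bordered (\<lambda>i. Z i i) (\<lambda>i j. Z i j + (real k - 1) * X i j))"
      unfolding Mz by (rule pd_psd[OF pdB])
    show "\<forall>i<n. \<forall>j<n. j < i \<longrightarrow> 0 \<le> 1 - Z i i - Z j j + Z i j + (real k - 1) * X i j"
      unfolding Z_def X_def using en by auto
    show "\<forall>i<n. \<forall>j<n. i \<noteq> j \<longrightarrow> 0 \<le> Z i i - Z i j - (real k - 1) * X i j"
      unfolding Z_def X_def using e0 by auto
  qed
  have "pd_on {..<n} (\<lambda>i j. Z i j - X i j)" unfolding Mz by (rule pdW)
  moreover have "pd_on (bidx {..<n}) (bordered (\<lambda>i. Z i i) (\<lambda>i j. Z i j + (real k - 1) * X i j))"
    unfolding Mz by (rule pdB)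
  ultimately show ?thesis using feas by blast
qed

theorem theorem3:
  fixes n k :: nat and E :: "nat set set"
  assumes "simple_graph n E" and "k \<ge> 1"
  shows
    "(\<forall>Y. feasP1 n E k Y \<longrightarrow> (\<exists>Y'. feasP2 n E k Y' \<and> objY n k Y' = objY n k Y)) \<and>
     (\<forall>Y. feasP1 n E k Y \<longrightarrow> (\<exists>Z X. feasR1 n E k Z X \<and> objZ n Z = objY n k Y)) \<and>
     (\<forall>Y. feasP2 n E k Y \<longrightarrow> (\<exists>Y'. feasP1 n E k Y' \<and> objY n k Y' = objY n k Y)) \<and>
     (\<forall>Y. feasP2 n E k Y \<longrightarrow> (\<exists>Z X. feasR1 n E k Z X \<and> objZ n Z = objY n k Y)) \<and>
     (\<forall>Z X. feasR1 n E k Z X \<longrightarrow> (\<exists>Y. feasP1 n E k Y \<and> objY n k Y = objZ n Z)) \<and>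
     (\<forall>Z X. feasR1 n E k Z X \<longrightarrow> (\<exists>Y. feasP2 n E k Y \<and> objY n k Y = objZ n Z)) \<and>
     (\<exists>Z X. feasR1 n E k Z X \<and> pd_on {..<n} (\<lambda>i j. Z i j - X i j) \<and>
        pd_on (bidx {..<n}) (bordered (\<lambda>i. Z i i) (\<lambda>i j. Z i j + (real k - 1) * X i j)))"
proof -
  have k1: "1 \<le> k" using assms(2) .
  show ?thesis
  proof (intro conjI allI impI)
    fix Y assume F: "feasP1 n E k Y"
    have r: "feasR1 n E k (ZY k Y) (XY k Y)" "objZ n (ZY k Y) = objY n k Y" using P1_R1[OF k1 F] by auto
    show "\<exists>Y'. feasP2 n E k Y' \<and> objY n k Y' = objY n k Y"
      using R1_P2[OF k1 r(1)] r(2) by auto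
  next
    fix Y assume F: "feasP1 n E k Y"
    show "\<exists>Z X. feasR1 n E k Z X \<and> objZ n Z = objY n k Y" using P1_R1[OF k1 F] by blast
  next
    fix Y assume F: "feasP2 n E k Y"
    have r: "feasR1 n E k (ZY k Y) (XY k Y)" "objZ n (ZY k Y) = objY n k Y" using P2_R1[OF k1 F] by auto
    show "\<exists>Y'. feasP1 n E k Y' \<and> objY n k Y' = objY n k Y"
      using R1_P1[OF k1 r(1)] r(2) by auto
  next
    fix Y assume F: "feasP2 n E k Y"
    show "\<exists>Z X. feasR1 n E k Z X \<and> objZ n Z = objY n k Y" using P2_R1[OF k1 F] by blast
  next
    fix Z X assume F: "feasR1 n E k Z X"
    show "\<exists>Y. feasP1 n E k Y \<and> objY n k Y = objZ n Z" using R1_P1[OF k1 F] by blast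
  next
    fix Z X assume F: "feasR1 n E k Z X"
    show "\<exists>Y. feasP2 n E k Y \<and> objY n k Y = objZ n Z" using R1_P2[OF k1 F] by blast
  next
    show "\<exists>Z X. feasR1 n E k Z X \<and> pd_on {..<n} (\<lambda>i j. Z i j - X i j) \<and>
        pd_on (bidx {..<n}) (bordered (\<lambda>i. Z i i) (\<lambda>i j. Z i j + (real k - 1) * X i j))"
      by (rule strict_feas[OF assms(1)])
  qed
qed

end
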